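(* Let ${\cal G}(\vec{V})$ be an acyclic directed mixed graph (ADMG) on a finite vertex set $\vec{V}$, and let $\vec{Y},\vec{A}\subseteq \vec{V}$ be disjoint sets. Given $p(\vec{Y}\mid \text{do}(\vec{a}))$ and ${\cal G}(\vec{V})$ as inputs, the ID algorithm fails if and only if any one of the following conditions holds: (1) There exists a hedge for $p(\vec{Y}\mid\text{do}(\vec{a}))$ in ${\cal G}(\vec{V})$. (2) Some district $\vec{D}\in{\cal D}({\cal G}_{\vec{Y}^*})$ is not intrinsic in ${\cal G}(\vec{V})$. (3) There exists a district $\vec{D}\in{\cal D}({\cal G}_{\vec{Y}^*})$ such that $\vec{D}\subsetneq \langle \vec{D}\rangle_{{\cal G}(\vec{V})}$.
   Context: An ADMG is a graph with directed edges ($\to$) and bidirected edges ($\leftrightarrow$) and no directed cycles. A set of vertices is bidirected connected if any two of its elements are joined by a path of bidirected edges using only vertices of the set; a district of a graph is a maximal bidirected connected set of its vertices, and ${\cal D}({\cal H})$ denotes the set of districts of a graph ${\cal H}$. $\vec{Y}^*$ is the set of vertices $V\in\vec{V}$ such that there is a directed path (possibly of length zero) from $V$ to some element of $\vec{Y}$ that does not intersect $\vec{A}$; ${\cal G}_{\vec{Y}^*}$ is the subgraph of ${\cal G}(\vec{V})$ induced on $\vec{Y}^*$. Conditional ADMGs and fixing: a CADMG ${\cal G}(\vec{R},\vec{S})$ has random vertices $\vec{R}$ and fixed vertices $\vec{S}$ (fixed vertices have no edges with arrowheads into them); ${\cal G}(\vec{V})$ is the CADMG with $\vec{S}=\emptyset$.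 A random vertex $R$ is fixable in ${\cal G}(\vec{R},\vec{S})$ if there is no other vertex $W$ such that both there is a directed path from $R$ to $W$ and a bidirected path from $R$ to $W$ in ${\cal G}(\vec{R},\vec{S})$. For fixable $R$, the fixing operator $\phi_R$ produces the CADMG ${\cal G}(\vec{R}\setminus\{R\},\vec{S}\cup\{R\})$ obtained by removing all edges with arrowheads into $R$. A sequence $\langle J_1,\ldots,J_k\rangle$ of distinct random vertices is valid in ${\cal G}(\vec{R},\vec{S})$ if it is empty, or $J_1$ is fixable in ${\cal G}(\vec{R},\vec{S})$ and $\langle J_2,\ldots,J_k\rangle$ is valid in $\phi_{J_1}({\cal G}(\vec{R},\vec{S}))$. A set $\vec{R}\subseteq\vec{V}$ is reachable in ${\cal G}(\vec{V})$ if there exists a sequence consisting of all elements of $\vec{V}\setminus\vec{R}$ that is valid in ${\cal G}(\vec{V})$; it is intrinsic if it is reachable and bidirected connected. For a set $\vec{S}\subseteq\vec{V}$, the reachable closure $\langle\vec{S}\rangle_{{\cal G}(\vec{V})}$ is the unique smallest reachable superset of $\vec{S}$. Hedges: for a set $\vec{R}$, an $\vec{R}$-rooted C-forest is a bidirected connected set $\vec{F}$ of vertices of ${\cal G}(\vec{V})$ with $\vec{R}\subseteq\vec{F}$ such that there is a subgraph of ${\cal G}(\vec{V})$ with vertex set $\vec{F}$ and a subset of the edges among $\vec{F}$ in which every element of $\vec{F}$ has a directed path (possibly trivial) to an element of $\vec{R}$. A hedge for $p(\vec{Y}\mid\text{do}(\vec{a}))$ in ${\cal G}(\vec{V})$ is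 a pair of $\vec{R}$-rooted C-forests $\vec{F},\vec{F}'$ with $\vec{F}\subsetneq\vec{F}'$, $\vec{F}\cap\vec{A}=\emptyset$, $\vec{A}\cap(\vec{F}'\setminus\vec{F})\neq\emptyset$, and $\vec{R}$ ancestral to $\vec{Y}$ via directed paths that do not intersect $\vec{A}$. The ID algorithm, on input $p(\vec{Y}\mid\text{do}(\vec{a}))$ and ${\cal G}(\vec{V})$, writes $p(\vec{Y}\mid\text{do}(\vec{a}))=\sum_{\vec{Y}^*\setminus\vec{Y}}\prod_{\vec{D}\in{\cal D}({\cal G}_{\vec{Y}^*})}p(\vec{D}\mid\text{do}(\vec{s}_{\vec{D}}))$ (with $\vec{s}_{\vec{D}}$ values of the parents of $\vec{D}$ outside $\vec{D}$) and, for each district $\vec{D}\in{\cal D}({\cal G}_{\vec{Y}^*})$, attempts to identify the term $p(\vec{D}\mid\text{do}(\vec{s}_{\vec{D}}))$ by finding a sequence of all elements of $\vec{V}\setminus\vec{D}$ valid in ${\cal G}(\vec{V})$ (and applying the corresponding fixing operations to $p(\vec{V})$). It fails if for some such district no valid sequence exists. *)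

theory Defs
  imports Main
begin

text \<open>An ADMG on vertex set V with directed edges Di (pairs (a,b) meaning a -> b)
  and bidirected edges Bi (symmetric; (a,b) meaning a <-> b).\<close>
definition admg :: "'v set \<Rightarrow> ('v \<times> 'v) set \<Rightarrow> ('v \<times> 'v) set \<Rightarrow> bool" where
  "admg V Di Bi \<longleftrightarrow> finite V \<and> Di \<subseteq> V \<times> V \<and> Bi \<subseteq> V \<times> V \<and> sym Bi
     \<and> (\<forall>v. (v, v) \<notin> Bi) \<and> acyclic Di"

definition bidir_connected :: "('v \<times> 'v) set \<Rightarrow> 'v set \<Rightarrow> bool" where
  "bidir_connected Bi X \<longleftrightarrow> (\<forall>a\<in>X. \<forall>b\<in>X. (a, b) \<in> (Bi \<inter> (X \<times> X))\<^sup>*)"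

definition districts :: "'v set \<Rightarrow> ('v \<times> 'v) set \<Rightarrow> 'v set set" where
  "districts U Bi = {D. D \<subseteq> U \<and> D \<noteq> {} \<and> bidir_connected (Bi \<inter> (U \<times> U)) D \<and>
      (\<forall>D'. D \<subseteq> D' \<and> D' \<subseteq> U \<and> bidir_connected (Bi \<inter> (U \<times> U)) D' \<longrightarrow> D' = D)}"

definition ystar :: "'v set \<Rightarrow> ('v \<times> 'v) set \<Rightarrow> 'v set \<Rightarrow> 'v set \<Rightarrow> 'v set" where
  "ystar V Di Y A = {v \<in> V - A. \<exists>y\<in>Y. (v, y) \<in> (Di \<inter> ((V - A) \<times> (V - A)))\<^sup>*}"

text \<open>CADMG: (random vertices R, fixed vertices S, directed edges, bidirected edges).\<close>
type_synonym 'v cadmg = "'v set \<times> 'v set \<times> ('v \<times> 'v) set \<times> ('v \<times> 'v) set"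

definition fixable :: "'v cadmg \<Rightarrow> 'v \<Rightarrow> bool" where
  "fixable G r = (case G of (R, S, Di, Bi) \<Rightarrow>
     r \<in> R \<and> \<not> (\<exists>w. w \<noteq> r \<and> (r, w) \<in> Di\<^sup>* \<and> (r, w) \<in> Bi\<^sup>*))"

definition fix_op :: "'v \<Rightarrow> 'v cadmg \<Rightarrow> 'v cadmg" where
  "fix_op r G = (case G of (R, S, Di, Bi) \<Rightarrow>
     (R - {r}, insert r S, {(a, b) \<in> Di. b \<noteq> r}, {(a, b) \<in> Bi. a \<noteq> r \<and> b \<noteq> r}))"

fun valid_seq :: "'v cadmg \<Rightarrow> 'v list \<Rightarrow> bool" where
  "valid_seq G [] = True"
| "valid_seq G (j # js) = (fixable G j \<and> valid_seq (fix_op j G) js)"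

definition reachable :: "'v set \<Rightarrow> ('v \<times> 'v) set \<Rightarrow> ('v \<times> 'v) set \<Rightarrow> 'v set \<Rightarrow> bool" where
  "reachable V Di Bi R \<longleftrightarrow> R \<subseteq> V \<and>
     (\<exists>js. distinct js \<and> set js = V - R \<and> valid_seq (V, {}, Di, Bi) js)"

definition intrinsic :: "'v set \<Rightarrow> ('v \<times> 'v) set \<Rightarrow> ('v \<times> 'v) set \<Rightarrow> 'v set \<Rightarrow> bool" where
  "intrinsic V Di Bi R \<longleftrightarrow> reachable V Di Bi R \<and> bidir_connected Bi R"

definition reach_closure :: "'v set \<Rightarrow> ('v \<times> 'v) set \<Rightarrow> ('v \<times> 'v) set \<Rightarrow> 'v set \<Rightarrow> 'v set" where
  "reach_closure V Di Bi S = (THE R. reachable V Di Bi R \<and> S \<subseteq> R \<and>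
     (\<forall>R'. reachable V Di Bi R' \<and> S \<subseteq> R' \<longrightarrow> R \<subseteq> R'))"

definition c_forest :: "'v set \<Rightarrow> ('v \<times> 'v) set \<Rightarrow> ('v \<times> 'v) set \<Rightarrow> 'v set \<Rightarrow> 'v set \<Rightarrow> bool" where
  "c_forest V Di Bi R F \<longleftrightarrow> F \<subseteq> V \<and> R \<subseteq> F \<and> bidir_connected Bi F \<and>
     (\<exists>E. E \<subseteq> Di \<inter> (F \<times> F) \<and> (\<forall>f\<in>F. \<exists>r\<in>R. (f, r) \<in> E\<^sup>*))"

definition has_hedge :: "'v set \<Rightarrow> ('v \<times> 'v) set \<Rightarrow> ('v \<times> 'v) set \<Rightarrow> 'v set \<Rightarrow> 'v set \<Rightarrow> bool" where
  "has_hedge V Di Bi Y A \<longleftrightarrow> (\<exists>R F F'. c_forest V Di Bi R F \<and> c_forest V Di Bi R F' \<and>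
     F \<subset> F' \<and> F \<inter> A = {} \<and> A \<inter> (F' - F) \<noteq> {} \<and> R \<subseteq> ystar V Di Y A)"

definition id_fails :: "'v set \<Rightarrow> ('v \<times> 'v) set \<Rightarrow> ('v \<times> 'v) set \<Rightarrow> 'v set \<Rightarrow> 'v set \<Rightarrow> bool" where
  "id_fails V Di Bi Y A \<longleftrightarrow> (\<exists>D \<in> districts (ystar V Di Y A) Bi.
     \<not> (\<exists>js. distinct js \<and> set js = V - D \<and> valid_seq (V, {}, Di, Bi) js))"

end

theory Submission
  imports Defs
begin

lemma fold_fix:
  "fold fix_op js (R,S,Di,Bi) = (R - set js, set js \<union> S, {(a,b)\<in>Di. b \<notin> set js},
      {(a,b)\<in>Bi. a \<notin> set js \<and> b \<notin> set js})"
  by (induction js arbitrary: R S Di Bi) (auto simp: fix_op_def)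

lemma valid_append:
  "valid_seq G (xs @ ys) \<longleftrightarrow> valid_seq G xs \<and> valid_seq (fold fix_op xs G) ys"
  by (induction xs arbitrary: G) auto

definition nofix :: "('v\<times>'v) set \<Rightarrow> ('v\<times>'v) set \<Rightarrow> 'v set \<Rightarrow> 'v \<Rightarrow> bool" where
  "nofix Di Bi K j \<longleftrightarrow> (\<exists>w. w \<noteq> j \<and> (j,w) \<in> (Di \<inter> K\<times>K)\<^sup>* \<and> (j,w) \<in> (Bi \<inter> K\<times>K)\<^sup>*)"

lemma first_in:
  assumes "valid_seq (V,{},Di,Bi) js" "set js \<inter> K \<noteq> {}"
  shows "\<exists>j\<in>set js \<inter> K. \<not> nofix Di Bi K j"
proof -
  from assms(2) have "\<exists>x\<in>set js. x \<in> K" by auto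
  from split_list_first_prop[OF this] obtain xs j ys where
    js: "js = xs @ j # ys" "j \<in> K" "\<forall>y\<in>set xs. y \<notin> K" by blast
  from assms(1) js have "valid_seq (fold fix_op xs (V,{},Di,Bi)) (j#ys)"
    by (simp add: valid_append)
  hence fx: "fixable (V - set xs, set xs \<union> {}, {(a,b)\<in>Di. b \<notin> set xs},
      {(a,b)\<in>Bi. a \<notin> set xs \<and> b \<notin> set xs}) j" by (simp add: fold_fix)
  have s1: "Di \<inter> K\<times>K \<subseteq> {(a,b)\<in>Di. b \<notin> set xs}" using js(3) by auto
  have s2: "Bi \<inter> K\<times>K \<subseteq> {(a,b)\<in>Bi. a \<notin> set xs \<and> b \<notin> set xs}" using js(3) by auto
  have "\<not> nofix Di Bi K j"
  proof
    assume "nofix Di Bi K j"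
    then obtain w where "w \<noteq> j" "(j,w) \<in> (Di\<inter>K\<times>K)\<^sup>*" "(j,w) \<in> (Bi\<inter>K\<times>K)\<^sup>*"
      unfolding nofix_def by blast
    with rtrancl_mono[OF s1] rtrancl_mono[OF s2] fx show False
      unfolding fixable_def by auto
  qed
  thus ?thesis using js by auto
qed

lemma path_stay:
  assumes "(j,w) \<in> {(a,b)\<in>Di. b \<notin> X}\<^sup>*" "j \<in> R0" "Di \<subseteq> V\<times>V" "R0 = V - X"
  shows "(j,w) \<in> (Di \<inter> R0\<times>R0)\<^sup>* \<and> w \<in> R0"
  using assms(1)
proof (induction rule: rtrancl_induct)
  case base thus ?case using assms by auto
next
  case (step y z)
  then have "z \<in> R0" "(y,z) \<in> Di \<inter> R0\<times>R0" using assms by auto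
  thus ?case using step by (meson rtrancl.rtrancl_into_rtrancl)
qed

lemma fixable_state:
  assumes "Di \<subseteq> V\<times>V" "Bi \<subseteq> V\<times>V" "j \<in> V - set js" "\<not> nofix Di Bi (V - set js) j"
  shows "fixable (fold fix_op js (V,{},Di,Bi)) j"
proof -
  let ?R = "V - set js"
  have sb: "{(a,b)\<in>Bi. a \<notin> set js \<and> b \<notin> set js} \<subseteq> Bi \<inter> ?R\<times>?R" using assms(2) by auto
  have "\<not>(\<exists>w. w\<noteq>j \<and> (j,w) \<in> {(a,b)\<in>Di. b \<notin> set js}\<^sup>* \<and>
        (j,w) \<in> {(a,b)\<in>Bi. a \<notin> set js \<and> b \<notin> set js}\<^sup>*)"
  proof
    assume "\<exists>w. w\<noteq>j \<and> (j,w) \<in> {(a,b)\<in>Di. b \<notin> set js}\<^sup>* \<and>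
        (j,w) \<in> {(a,b)\<in>Bi. a \<notin> set js \<and> b \<notin> set js}\<^sup>*"
    then obtain w where w: "w\<noteq>j" "(j,w) \<in> {(a,b)\<in>Di. b \<notin> set js}\<^sup>*"
        "(j,w) \<in> {(a,b)\<in>Bi. a \<notin> set js \<and> b \<notin> set js}\<^sup>*" by blast
    have "(j,w) \<in> (Di \<inter> ?R\<times>?R)\<^sup>*" using path_stay[OF w(2) assms(3) assms(1)] by blast
    moreover have "(j,w) \<in> (Bi \<inter> ?R\<times>?R)\<^sup>*" using rtrancl_mono[OF sb] w(3) by blast
    ultimately show False using assms(4) w(1) unfolding nofix_def by blast
  qed
  then show ?thesis using assms(3) by (simp add: fold_fix fixable_def)
qed

lemma rt_sym: "sym r \<Longrightarrow> (a,b) \<in> r\<^sup>* \<Longrightarrow> (b,a) \<in> r\<^sup>*"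
  using sym_rtrancl unfolding sym_def by blast

lemma sym_restr: "sym Bi \<Longrightarrow> sym (Bi \<inter> K\<times>K)" by (auto simp: sym_def)

lemma closure_ex:
  assumes adm: "admg V Di Bi" and DV: "D \<subseteq> V"
  shows "\<exists>R0. reachable V Di Bi R0 \<and> D \<subseteq> R0 \<and> (\<forall>j\<in>R0-D. nofix Di Bi R0 j)
     \<and> (\<forall>R'. reachable V Di Bi R' \<and> D \<subseteq> R' \<longrightarrow> R0 \<subseteq> R')"
proof -
  have fin: "finite V" and DiV: "Di \<subseteq> V\<times>V" and BiV: "Bi \<subseteq> V\<times>V"
    using adm by (auto simp: admg_def)
  let ?P = "\<lambda>R. reachable V Di Bi R \<and> D \<subseteq> R"
  have "?P V" using DV by (auto simp: reachable_def intro: exI[of _ "[]"])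
  then obtain R0 where P0: "?P R0" and min: "\<forall>R. ?P R \<longrightarrow> card R0 \<le> card R"
    using ex_has_least_nat[of ?P V card] by blast
  have stuck: "\<forall>j\<in>R0-D. nofix Di Bi R0 j"
  proof (rule ballI, rule ccontr)
    fix j assume j: "j \<in> R0 - D" and nf: "\<not> nofix Di Bi R0 j"
    from P0 obtain js where js: "distinct js" "set js = V - R0" "valid_seq (V,{},Di,Bi) js" "R0 \<subseteq> V"
      unfolding reachable_def by blast
    have R0eq: "R0 = V - set js" using js by auto
    have "fixable (fold fix_op js (V,{},Di,Bi)) j"
      using fixable_state[OF DiV BiV, of j js] j nf R0eq js(4) by auto
    hence "valid_seq (V,{},Di,Bi) (js @ [j])" using js(3) by (simp add: valid_append)
    moreover have "distinct (js @ [j])" using js j by auto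
    moreover have "set (js @ [j]) = V - (R0 - {j})" using js j by auto
    ultimately have "?P (R0 - {j})" using j P0 js(4) unfolding reachable_def by blast
    with min have "card R0 \<le> card (R0 - {j})" by blast
    moreover have "finite R0" using js(4) fin finite_subset by blast
    ultimately show False using j card_Diff1_less by fastforce
  qed
  have least: "\<forall>R'. ?P R' \<longrightarrow> R0 \<subseteq> R'"
  proof (intro allI impI subsetI, rule ccontr)
    fix R' x assume P': "?P R'" and x: "x \<in> R0" "x \<notin> R'"
    from P' obtain js where js: "distinct js" "set js = V - R'" "valid_seq (V,{},Di,Bi) js"
      unfolding reachable_def by blast
    have "x \<in> V" using P0 x unfolding reachable_def by blast
    hence "set js \<inter> R0 \<noteq> {}" using js x by auto
    from first_in[OF js(3) this] obtain j where j: "j \<in> set js" "j \<in> R0" "\<not> nofix Di Bi R0 j" by blast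
    moreover have "j \<notin> D" using j(1) js(2) P' by auto
    ultimately show False using stuck by blast
  qed
  show ?thesis using P0 stuck least by blast
qed

lemma closure_eq:
  assumes "reachable V Di Bi R0" "D \<subseteq> R0" "\<forall>R'. reachable V Di Bi R' \<and> D \<subseteq> R' \<longrightarrow> R0 \<subseteq> R'"
  shows "reach_closure V Di Bi D = R0"
  unfolding reach_closure_def
proof (rule the_equality)
  show "reachable V Di Bi R0 \<and> D \<subseteq> R0 \<and> (\<forall>R'. reachable V Di Bi R' \<and> D \<subseteq> R' \<longrightarrow> R0 \<subseteq> R')"
    using assms by blast
next
  fix R assume "reachable V Di Bi R \<and> D \<subseteq> R \<and> (\<forall>R'. reachable V Di Bi R' \<and> D \<subseteq> R' \<longrightarrow> R \<subseteq> R')"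
  thus "R = R0" using assms by blast
qed

lemma comp_district:
  assumes "sym Bi" "f0 \<in> U"
  shows "{v\<in>U. (f0,v) \<in> (Bi\<inter>U\<times>U)\<^sup>*} \<in> districts U Bi"
proof -
  let ?B = "Bi\<inter>U\<times>U"
  let ?D = "{v\<in>U. (f0,v) \<in> ?B\<^sup>*}"
  have stay: "(f0,v) \<in> (?B \<inter> ?D\<times>?D)\<^sup>*" if "(f0,v) \<in> ?B\<^sup>*" for v
    using that
  proof (induction rule: rtrancl_induct)
    case base thus ?case by simp
  next
    case (step y z)
    have "y \<in> ?D" using step assms by auto
    moreover have "z \<in> ?D" using step by (auto intro: rtrancl.rtrancl_into_rtrancl)
    ultimately have "(y,z) \<in> ?B \<inter> ?D\<times>?D" using step by auto
    thus ?case using step by (meson rtrancl.rtrancl_into_rtrancl)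
  qed
  have symD: "sym (?B \<inter> ?D\<times>?D)" using assms(1) by (auto simp: sym_def)
  have conn: "bidir_connected ?B ?D"
    unfolding bidir_connected_def
  proof (intro ballI)
    fix a b assume "a \<in> ?D" "b \<in> ?D"
    then have "(f0,a) \<in> (?B \<inter> ?D\<times>?D)\<^sup>*" "(f0,b) \<in> (?B \<inter> ?D\<times>?D)\<^sup>*" using stay by auto
    then show "(a,b) \<in> (?B \<inter> ?D\<times>?D)\<^sup>*" using rt_sym[OF symD] by (meson rtrancl_trans)
  qed
  have f0D: "f0 \<in> ?D" using assms by auto
  have maxl: "\<forall>D'. ?D \<subseteq> D' \<and> D' \<subseteq> U \<and> bidir_connected ?B D' \<longrightarrow> D' = ?D"
  proof (intro allI impI)
    fix D' assume h: "?D \<subseteq> D' \<and> D' \<subseteq> U \<and> bidir_connected ?B D'"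
    have "D' \<subseteq> ?D"
    proof
      fix v assume "v \<in> D'"
      then have "(f0,v) \<in> (?B \<inter> D'\<times>D')\<^sup>*" using h f0D unfolding bidir_connected_def by blast
      then have "(f0,v) \<in> ?B\<^sup>*" using rtrancl_mono[of "?B \<inter> D'\<times>D'" ?B] by blast
      then show "v \<in> ?D" using h \<open>v \<in> D'\<close> by auto
    qed
    then show "D' = ?D" using h by blast
  qed
  show ?thesis unfolding districts_def using conn f0D maxl by blast
qed

lemma dist_conn:
  assumes "D \<in> districts U Bi"
  shows "bidir_connected Bi D"
proof -
  have "bidir_connected (Bi \<inter> U\<times>U) D" using assms by (auto simp: districts_def)
  moreover have "(Bi \<inter> U\<times>U) \<inter> D\<times>D \<subseteq> Bi \<inter> D\<times>D" by auto
  ultimately show ?thesis unfolding bidir_connected_def using rtrancl_mono by blast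
qed


lemma tr_last: "(a,b) \<in> (Di \<inter> R0\<times>R0)\<^sup>+ \<Longrightarrow> b \<in> R0"
  by (induction rule: trancl.induct) auto

lemma ystar_sub: "ystar V Di Y A \<subseteq> V - A" by (auto simp: ystar_def)

lemma hedge_from:
  assumes adm: "admg V Di Bi"
    and DU: "D \<in> districts (ystar V Di Y A) Bi" and nr: "\<not> reachable V Di Bi D"
  shows "has_hedge V Di Bi Y A"
proof -
  let ?U = "ystar V Di Y A"
  have fin: "finite V" and DiV: "Di \<subseteq> V\<times>V" and BiV: "Bi \<subseteq> V\<times>V" and sB: "sym Bi"
    and acy: "acyclic Di" using adm by (auto simp: admg_def)
  have DsU: "D \<subseteq> ?U" and Dne: "D \<noteq> {}" and Dc: "bidir_connected (Bi \<inter> ?U\<times>?U) D"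
    and Dmax: "\<forall>D'. D \<subseteq> D' \<and> D' \<subseteq> ?U \<and> bidir_connected (Bi \<inter> ?U\<times>?U) D' \<longrightarrow> D' = D"
    using DU by (auto simp: districts_def)
  have UVA: "?U \<subseteq> V - A" by (rule ystar_sub)
  have DV: "D \<subseteq> V" using DsU UVA by blast
  obtain R0 where R0r: "reachable V Di Bi R0" and DR0: "D \<subseteq> R0"
    and stuck: "\<forall>j\<in>R0-D. nofix Di Bi R0 j" using closure_ex[OF adm DV] by blast
  have R0V: "R0 \<subseteq> V" using R0r by (auto simp: reachable_def)
  have neq: "R0 \<noteq> D" using R0r nr by blast
  obtain d0 where d0: "d0 \<in> D" using Dne by blast
  define Di0 where "Di0 = Di \<inter> R0\<times>R0"
  define Bi0 where "Bi0 = Bi \<inter> R0\<times>R0"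
  have sB0: "sym Bi0" unfolding Bi0_def using sB by (auto simp: sym_def)
  define good where "good v \<longleftrightarrow> (d0,v) \<in> Bi0\<^sup>* \<and> (\<exists>d\<in>D. (v,d) \<in> Di0\<^sup>*)" for v
  have Dgood: "good v" if "v \<in> D" for v
  proof -
    have "(d0,v) \<in> ((Bi \<inter> ?U\<times>?U) \<inter> D\<times>D)\<^sup>*" using Dc d0 that unfolding bidir_connected_def by blast
    moreover have "(Bi \<inter> ?U\<times>?U) \<inter> D\<times>D \<subseteq> Bi0" unfolding Bi0_def using DR0 by auto
    ultimately have "(d0,v) \<in> Bi0\<^sup>*" using rtrancl_mono by blast
    then show ?thesis unfolding good_def using that by blast
  qed
  have allgood: "\<forall>v\<in>R0. good v"
  proof (rule ccontr)
    assume "\<not> (\<forall>v\<in>R0. good v)"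
    then obtain v where v: "v \<in> {v\<in>R0. \<not> good v}" by blast
    have "finite Di0" unfolding Di0_def using finite_subset[OF _ finite_cartesian_product[OF fin fin]] DiV by blast
    moreover have "acyclic Di0" unfolding Di0_def using acy acyclic_subset by blast
    ultimately have "wf (Di0\<inverse>)" by (rule finite_acyclic_wf_converse)
    hence wf1: "wf ((Di0\<inverse>)\<^sup>+)" by (rule wf_trancl)
    obtain j where jZ: "j \<in> {v\<in>R0. \<not> good v}"
      and jmin: "\<forall>y. (y,j) \<in> (Di0\<inverse>)\<^sup>+ \<longrightarrow> y \<notin> {v\<in>R0. \<not> good v}"
      using wf1 v unfolding wf_eq_minimal by metis
    have "j \<notin> D" using jZ Dgood by blast
    then have "nofix Di Bi R0 j" using stuck jZ by blast
    then obtain w where w: "w \<noteq> j" "(j,w) \<in> Di0\<^sup>*" "(j,w) \<in> Bi0\<^sup>*"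
      unfolding nofix_def Di0_def Bi0_def by blast
    have "(j,w) \<in> Di0\<^sup>+" using w(1,2) by (simp add: rtrancl_eq_or_trancl)
    hence "(w,j) \<in> (Di0\<inverse>)\<^sup>+" by (simp add: trancl_converse)
    hence "w \<notin> {v\<in>R0. \<not> good v}" using jmin by blast
    moreover have "w \<in> R0" using \<open>(j,w) \<in> Di0\<^sup>+\<close> tr_last unfolding Di0_def by metis
    ultimately have gw: "good w" by blast
    then obtain d where d: "d \<in> D" "(w,d) \<in> Di0\<^sup>*" "(d0,w) \<in> Bi0\<^sup>*" unfolding good_def by blast
    have "(j,d) \<in> Di0\<^sup>*" using w(2) d(2) by (meson rtrancl_trans)
    moreover have "(d0,j) \<in> Bi0\<^sup>*" using d(3) rt_sym[OF sB0 w(3)] by (meson rtrancl_trans)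
    ultimately have "good j" unfolding good_def using d(1) by blast
    then show False using jZ by blast
  qed
  have R0conn: "(a,b) \<in> Bi0\<^sup>*" if "a \<in> R0" "b \<in> R0" for a b
    using allgood that rt_sym[OF sB0] unfolding good_def by (meson rtrancl_trans)
  have cf1: "c_forest V Di Bi D D"
    unfolding c_forest_def using DV dist_conn[OF DU] by (auto intro!: exI[of _ "{}"])
  have cf2: "c_forest V Di Bi D R0"
    unfolding c_forest_def
  proof (intro conjI)
    show "R0 \<subseteq> V" "D \<subseteq> R0" by fact+
    show "bidir_connected Bi R0" unfolding bidir_connected_def using R0conn unfolding Bi0_def by blast
    show "\<exists>E\<subseteq>Di \<inter> R0 \<times> R0. \<forall>f\<in>R0. \<exists>r\<in>D. (f, r) \<in> E\<^sup>*"
      using allgood unfolding good_def Di0_def by blast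
  qed
  have DA: "D \<inter> A = {}" using DsU UVA by blast
  have AR: "A \<inter> (R0 - D) \<noteq> {}"
  proof
    assume AR0: "A \<inter> (R0 - D) = {}"
    have R0U: "R0 \<subseteq> ?U"
    proof
      fix v assume vR: "v \<in> R0"
      have vA: "v \<in> V - A" using vR R0V AR0 DA by blast
      obtain d where d: "d \<in> D" "(v,d) \<in> Di0\<^sup>*" using allgood vR unfolding good_def by blast
      have "R0 \<subseteq> V - A" using R0V AR0 DA by blast
      then have "Di0 \<subseteq> Di \<inter> (V - A)\<times>(V - A)" unfolding Di0_def by blast
      then have vd: "(v,d) \<in> (Di \<inter> (V - A)\<times>(V - A))\<^sup>*" using d(2) rtrancl_mono by blast
      obtain y where "y \<in> Y" "(d,y) \<in> (Di \<inter> (V - A)\<times>(V - A))\<^sup>*"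
        using d(1) DsU unfolding ystar_def by blast
      then show "v \<in> ?U" unfolding ystar_def using vA vd rtrancl_trans[of v d _ y] by blast
    qed
    have "bidir_connected (Bi \<inter> ?U\<times>?U) R0"
    proof -
      have "Bi0 \<subseteq> (Bi \<inter> ?U\<times>?U) \<inter> R0\<times>R0" unfolding Bi0_def using R0U by blast
      then show ?thesis unfolding bidir_connected_def using R0conn rtrancl_mono by blast
    qed
    then have "R0 = D" using Dmax DR0 R0U by blast
    then show False using neq by blast
  qed
  show ?thesis unfolding has_hedge_def
    using cf1 cf2 DR0 neq DA AR DsU by blast
qed

lemma hedge_to:
  assumes adm: "admg V Di Bi" and h: "has_hedge V Di Bi Y A"
  shows "\<exists>D\<in>districts (ystar V Di Y A) Bi. \<not> reachable V Di Bi D"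
proof -
  let ?U = "ystar V Di Y A"
  have sB: "sym Bi" using adm by (auto simp: admg_def)
  have UVA: "?U \<subseteq> V - A" by (rule ystar_sub)
  obtain R F F' where cf: "c_forest V Di Bi R F" and cf': "c_forest V Di Bi R F'"
    and FF: "F \<subset> F'" and FA: "F \<inter> A = {}" and AF: "A \<inter> (F' - F) \<noteq> {}"
    and RU: "R \<subseteq> ?U" using h unfolding has_hedge_def by blast
  have FV: "F \<subseteq> V" and RF: "R \<subseteq> F" and Fc: "bidir_connected Bi F"
    using cf by (auto simp: c_forest_def)
  obtain E where E: "E \<subseteq> Di \<inter> F\<times>F" "\<forall>f\<in>F. \<exists>r\<in>R. (f,r) \<in> E\<^sup>*" using cf by (auto simp: c_forest_def)
  obtain E' where E': "E' \<subseteq> Di \<inter> F'\<times>F'" "\<forall>f\<in>F'. \<exists>r\<in>R. (f,r) \<in> E'\<^sup>*" using cf' by (auto simp: c_forest_def)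
  have F'V: "F' \<subseteq> V" and F'c: "bidir_connected Bi F'" using cf' by (auto simp: c_forest_def)
  obtain a where a: "a \<in> A" "a \<in> F'" "a \<notin> F" using AF by blast
  obtain r0 where r0: "r0 \<in> R" using E' a by blast
  have FU: "F \<subseteq> ?U"
  proof
    fix f assume fF: "f \<in> F"
    obtain r where r: "r \<in> R" "(f,r) \<in> E\<^sup>*" using E fF by blast
    have "E \<subseteq> Di \<inter> (V - A)\<times>(V - A)" using E(1) FV FA by blast
    then have fr: "(f,r) \<in> (Di \<inter> (V - A)\<times>(V - A))\<^sup>*" using r(2) rtrancl_mono by blast
    obtain y where "y \<in> Y" "(r,y) \<in> (Di \<inter> (V - A)\<times>(V - A))\<^sup>*"
      using r(1) RU unfolding ystar_def by blast
    moreover have "f \<in> V - A" using fF FV FA by blast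
    ultimately show "f \<in> ?U" unfolding ystar_def using fr rtrancl_trans[of f r _ y] by blast
  qed
  have f0: "r0 \<in> ?U" "r0 \<in> F" using r0 RF FU by auto
  define D where "D = {v\<in>?U. (r0,v) \<in> (Bi\<inter>?U\<times>?U)\<^sup>*}"
  have Dd: "D \<in> districts ?U Bi" unfolding D_def by (rule comp_district[OF sB f0(1)])
  have FD: "F \<subseteq> D"
  proof
    fix f assume "f \<in> F"
    then have "(r0,f) \<in> (Bi \<inter> F\<times>F)\<^sup>*" using Fc f0 unfolding bidir_connected_def by blast
    moreover have "Bi \<inter> F\<times>F \<subseteq> Bi\<inter>?U\<times>?U" using FU by blast
    ultimately show "f \<in> D" unfolding D_def using FU \<open>f \<in> F\<close> rtrancl_mono by blast
  qed
  have "\<not> reachable V Di Bi D"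
  proof
    assume "reachable V Di Bi D"
    then obtain js where js: "set js = V - D" "valid_seq (V,{},Di,Bi) js"
      unfolding reachable_def by blast
    have "a \<notin> D" using a(1) UVA unfolding D_def by blast
    then have "set js \<inter> F' \<noteq> {}" using js a F'V by blast
    from first_in[OF js(2) this] obtain j where j: "j \<in> set js" "j \<in> F'" "\<not> nofix Di Bi F' j" by blast
    have jF: "j \<notin> F" using j(1) js(1) FD by blast
    obtain r where r: "r \<in> R" "(j,r) \<in> E'\<^sup>*" using E' j(2) by blast
    have "(j,r) \<in> (Di \<inter> F'\<times>F')\<^sup>*" using r(2) E'(1) rtrancl_mono by blast
    moreover have "(j,r) \<in> (Bi \<inter> F'\<times>F')\<^sup>*" using F'c j(2) r(1) RF FF unfolding bidir_connected_def by blast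
    moreover have "r \<noteq> j" using r(1) RF jF by blast
    ultimately show False using j(3) unfolding nofix_def by blast
  qed
  then show ?thesis using Dd by blast
qed

theorem proposition1:
  fixes V Y A :: "'v set" and Di Bi :: "('v \<times> 'v) set"
  assumes "admg V Di Bi" and "Y \<subseteq> V" and "A \<subseteq> V" and "Y \<inter> A = {}"
  shows "(id_fails V Di Bi Y A \<longleftrightarrow> has_hedge V Di Bi Y A)
       \<and> (id_fails V Di Bi Y A \<longleftrightarrow> (\<exists>D \<in> districts (ystar V Di Y A) Bi. \<not> intrinsic V Di Bi D))
       \<and> (id_fails V Di Bi Y A \<longleftrightarrow> (\<exists>D \<in> districts (ystar V Di Y A) Bi. D \<subset> reach_closure V Di Bi D))"
proof -
  let ?U = "ystar V Di Y A"
  have UV: "?U \<subseteq> V" using ystar_sub[of V Di Y A] by blast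
  have DV: "D \<subseteq> V" if "D \<in> districts ?U Bi" for D using that UV by (auto simp: districts_def)
  have fails: "id_fails V Di Bi Y A \<longleftrightarrow> (\<exists>D \<in> districts ?U Bi. \<not> reachable V Di Bi D)"
    unfolding id_fails_def reachable_def using DV by (meson bex_cong)
  have i2: "intrinsic V Di Bi D \<longleftrightarrow> reachable V Di Bi D" if "D \<in> districts ?U Bi" for D
    by (simp add: intrinsic_def dist_conn[OF that])
  have i3: "D \<subset> reach_closure V Di Bi D \<longleftrightarrow> \<not> reachable V Di Bi D" if "D \<in> districts ?U Bi" for D
  proof -
    have DV0: "D \<subseteq> V" using DV[OF that] .
    obtain R0 where R0all: "reachable V Di Bi R0 \<and> D \<subseteq> R0 \<and> (\<forall>j\<in>R0-D. nofix Di Bi R0 j)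
     \<and> (\<forall>R'. reachable V Di Bi R' \<and> D \<subseteq> R' \<longrightarrow> R0 \<subseteq> R')"
      using closure_ex[OF assms(1) DV0] by (rule exE)
    have R0: "reachable V Di Bi R0" "D \<subseteq> R0"
      "\<forall>R'. reachable V Di Bi R' \<and> D \<subseteq> R' \<longrightarrow> R0 \<subseteq> R'" using R0all by simp_all
    have "reach_closure V Di Bi D = R0" using closure_eq[OF R0] .
    moreover have "reachable V Di Bi D \<Longrightarrow> R0 = D" using R0 by blast
    moreover have "\<not> reachable V Di Bi D \<Longrightarrow> R0 \<noteq> D" using R0(1) by metis
    ultimately show ?thesis using R0(2) by (metis psubsetI psubset_eq)
  qed
  have h1: "id_fails V Di Bi Y A \<longleftrightarrow> has_hedge V Di Bi Y A"
  proof
    assume "id_fails V Di Bi Y A"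
    then obtain D where "D \<in> districts ?U Bi" "\<not> reachable V Di Bi D" using fails by blast
    then show "has_hedge V Di Bi Y A" by (rule hedge_from[OF assms(1)])
  next
    assume "has_hedge V Di Bi Y A"
    then show "id_fails V Di Bi Y A" using fails hedge_to[OF assms(1)] by simp
  qed
  have h2: "id_fails V Di Bi Y A \<longleftrightarrow> (\<exists>D \<in> districts ?U Bi. \<not> intrinsic V Di Bi D)"
    unfolding fails using i2 by (meson bex_cong)
  have h3: "id_fails V Di Bi Y A \<longleftrightarrow> (\<exists>D \<in> districts ?U Bi. D \<subset> reach_closure V Di Bi D)"
    unfolding fails using i3 by (meson bex_cong)
  show ?thesis using h1 h2 h3 by (intro conjI)
qed

end
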